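(* Suppose $pn\to\infty$ and $q\ln n\to\infty$ as $n\to\infty$, where $q=1-p$. Then for every $\varepsilon>0$ there exists $n_0$ such that for all $n\ge n_0$, $$u_2(n,p)\le(2+\varepsilon)\log_{\frac{1}{1-p}}(np)\quad\text{and}\quad u_2'(n,p)\le(2+\varepsilon)\log_{\frac{1}{1-p}}(np).$$
   Context: $G(n,p)$ is the Erdős–Rényi random graph on $n$ labelled vertices (vertex set $V$), each edge present independently with probability $p=p(n)$; $\mathbb{P}_{n,p}$ is the corresponding probability and $q=1-p$. A diameter graph in $\mathbb{R}^d$ is a graph $(V,E)$ with $V\subset\mathbb{R}^d$ finite and $E=\{\{\mathbf{x},\mathbf{y}\}\subseteq V: |\mathbf{x}-\mathbf{y}|=\operatorname{diam}V\}$, where $\operatorname{diam}V=\max_{\mathbf{x},\mathbf{y}\in V}|\mathbf{x}-\mathbf{y}|$ (Euclidean norm); a graph is a diameter graph in $\mathbb{R}^d$ if it is isomorphic to one. $u_d(n,p)$ is the largest positive integer $k$ such that $\mathbb{P}_{n,p}\big(\exists W\subseteq V,\ |W|=k,\ G[W]$ is a diameter graph in $\mathbb{R}^d$ and $\chi(G[W])=d+1\big)>\frac12$, where $G[W]$ is the induced subgraph; if no such $k$ exists, $u_d(n,p)=0$. $u_d'(n,p)$ is defined identically with the additional requirement that $G[W]$ be connected. *)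

theory Defs
  imports Complex_Main
begin

text \<open>Vertex set V = {0..<n}. A graph on V is a set of 2-element subsets of V.\<close>

definition all_edges :: "nat \<Rightarrow> nat set set" where
  "all_edges n = {e. e \<subseteq> {..<n} \<and> card e = 2}"

definition adj :: "nat set set \<Rightarrow> nat \<Rightarrow> nat \<Rightarrow> bool" where
  "adj Ed x y \<longleftrightarrow> x \<noteq> y \<and> {x, y} \<in> Ed"

text \<open>P_{n,p}(Q): probability that G(n,p) has property Q, each of the
  n choose 2 edges present independently with probability p.\<close>
definition prob_Gnp :: "nat \<Rightarrow> real \<Rightarrow> (nat set set \<Rightarrow> bool) \<Rightarrow> real" where
  "prob_Gnp n p Q =
     (\<Sum>Ed\<in>Pow (all_edges n).
        (if Q Ed then p ^ card Ed * (1 - p) ^ (card (all_edges n) - card Ed) else 0))"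

definition euclid_dist :: "nat \<Rightarrow> (nat \<Rightarrow> real) \<Rightarrow> (nat \<Rightarrow> real) \<Rightarrow> real" where
  "euclid_dist d x y = sqrt (\<Sum>i<d. (x i - y i)^2)"

definition point_in_R :: "nat \<Rightarrow> (nat \<Rightarrow> real) \<Rightarrow> bool" where
  "point_in_R d x \<longleftrightarrow> (\<forall>i\<ge>d. x i = 0)"

definition diam_R :: "nat \<Rightarrow> (nat \<Rightarrow> real) set \<Rightarrow> real" where
  "diam_R d S = Max {euclid_dist d x y | x y. x \<in> S \<and> y \<in> S}"

definition is_diameter_graph :: "nat \<Rightarrow> 'v set \<Rightarrow> ('v \<Rightarrow> 'v \<Rightarrow> bool) \<Rightarrow> bool" where
  "is_diameter_graph d W E \<longleftrightarrow>
     (\<exists>f. (\<forall>v\<in>W. point_in_R d (f v)) \<and> inj_on f W \<and>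
          (\<forall>x\<in>W. \<forall>y\<in>W. x \<noteq> y \<longrightarrow>
              (E x y \<longleftrightarrow> euclid_dist d (f x) (f y) = diam_R d (f ` W))))"

definition proper_colouring :: "'v set \<Rightarrow> ('v \<Rightarrow> 'v \<Rightarrow> bool) \<Rightarrow> nat \<Rightarrow> ('v \<Rightarrow> nat) \<Rightarrow> bool" where
  "proper_colouring W E k c \<longleftrightarrow>
     (\<forall>v\<in>W. c v < k) \<and> (\<forall>x\<in>W. \<forall>y\<in>W. E x y \<longrightarrow> c x \<noteq> c y)"

definition chromatic_number :: "'v set \<Rightarrow> ('v \<Rightarrow> 'v \<Rightarrow> bool) \<Rightarrow> nat" where
  "chromatic_number W E = (LEAST k. \<exists>c. proper_colouring W E k c)"

definition connected_graph :: "'v set \<Rightarrow> ('v \<Rightarrow> 'v \<Rightarrow> bool) \<Rightarrow> bool" where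
  "connected_graph W E \<longleftrightarrow>
     (\<forall>x\<in>W. \<forall>y\<in>W. (x, y) \<in> {(a, b). a \<in> W \<and> b \<in> W \<and> E a b}\<^sup>*)"

text \<open>Induced subgraph G[W] is (W, adj Ed restricted to W); since all
  quantifiers above range over W, we simply pass W and adj Ed.\<close>

definition good_set :: "nat \<Rightarrow> bool \<Rightarrow> nat set set \<Rightarrow> nat set \<Rightarrow> bool" where
  "good_set d conn Ed W \<longleftrightarrow>
     is_diameter_graph d W (adj Ed) \<and> chromatic_number W (adj Ed) = d + 1 \<and>
     (conn \<longrightarrow> connected_graph W (adj Ed))"

definition u_gen :: "nat \<Rightarrow> bool \<Rightarrow> nat \<Rightarrow> real \<Rightarrow> nat" where
  "u_gen d conn n p =
     (if \<exists>k>0. prob_Gnp n p (\<lambda>Ed. \<exists>W\<subseteq>{..<n}. card W = k \<and> good_set d conn Ed W) > 1/2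
      then (GREATEST k. k > 0 \<and>
              prob_Gnp n p (\<lambda>Ed. \<exists>W\<subseteq>{..<n}. card W = k \<and> good_set d conn Ed W) > 1/2)
      else 0)"

definition u :: "nat \<Rightarrow> nat \<Rightarrow> real \<Rightarrow> nat" where
  "u d n p = u_gen d False n p"

definition u' :: "nat \<Rightarrow> nat \<Rightarrow> real \<Rightarrow> nat" where
  "u' d n p = u_gen d True n p"

end

theory Submission
  imports Defs
begin


lemma mid_zero:
  fixes a1 a2 b1 b2 c1 c2 w1 w2 l m D :: real
  assumes b: "b1 = l*a1 + m*c1" "b2 = l*a2+m*c2" and lm: "l \<ge> 0" "m \<ge> 0"
   and na: "a1^2+a2^2 = D^2" and nb: "b1^2+b2^2 = D^2" and nc: "c1^2+c2^2 = D^2"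
   and ac: "(a1,a2) \<noteq> (c1,c2)" and ba: "(b1,b2)\<noteq>(a1,a2)" and bc: "(b1,b2)\<noteq>(c1,c2)"
   and wb: "(w1-b1)^2+(w2-b2)^2 = D^2" and wa: "(w1-a1)^2+(w2-a2)^2 \<le> D^2"
   and wc: "(w1-c1)^2+(w2-c2)^2 \<le> D^2"
  shows "w1 = 0 \<and> w2 = 0"
proof -
  have acD: "a1*c1+a2*c2 < D^2"
  proof -
    have "(a1-c1)^2 + (a2-c2)^2 > 0" using ac
      by (metis add_less_same_cancel2 not_less_iff_gr_or_eq power2_less_0 prod.inject right_minus_eq sum_power2_gt_zero_iff)
    thus ?thesis using na nc by (simp add: power2_eq_square algebra_simps)
  qed
  have l0: "l > 0"
  proof (rule ccontr)
    assume "\<not> l > 0" hence "l = 0" using lm by auto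
    hence "b1 = m*c1" "b2 = m*c2" using b by auto
    hence "m^2 * D^2 = D^2"
    proof -
      have "(m*c1)^2+(m*c2)^2 = m^2*(c1^2+c2^2)" by (simp add: power_mult_distrib algebra_simps)
      thus ?thesis using nb nc \<open>b1 = m*c1\<close> \<open>b2 = m*c2\<close> by simp
    qed
    moreover have "D^2 \<noteq> 0" using ac na nc by auto
    ultimately have "m^2 = 1" by simp
    hence "m = 1" using lm by (simp add: power2_eq_1_iff) 
    thus False using bc \<open>b1 = m*c1\<close> \<open>b2 = m*c2\<close> by simp
  qed
  have m0: "m > 0"
  proof (rule ccontr)
    assume "\<not> m > 0" hence "m = 0" using lm by auto
    hence "b1 = l*a1" "b2 = l*a2" using b by auto
    hence "l^2 * D^2 = D^2"
    proof -
      have "(l*a1)^2+(l*a2)^2 = l^2*(a1^2+a2^2)" by (simp add: power_mult_distrib algebra_simps)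
      thus ?thesis using nb na \<open>b1 = l*a1\<close> \<open>b2 = l*a2\<close> by simp
    qed
    moreover have "D^2 \<noteq> 0" using ac na nc by auto
    ultimately have "l^2 = 1" by simp
    hence "l = 1" using lm by (simp add: power2_eq_1_iff) 
    thus False using ba \<open>b1 = l*a1\<close> \<open>b2 = l*a2\<close> by simp
  qed
  have "D^2 = l^2*(a1^2+a2^2) + m^2*(c1^2+c2^2) + 2*l*m*(a1*c1+a2*c2)"
    using nb b by (simp add: power2_eq_square algebra_simps)
  also have "\<dots> < l^2*D^2 + m^2*D^2 + 2*l*m*D^2"
    using na nc acD l0 m0 by simp
  finally have "D^2 < (l+m)^2 * D^2" by (simp add: power2_eq_square algebra_simps)
  moreover have "D^2 \<noteq> 0" using ac na nc by auto
  hence "D^2 > 0" by simp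
  ultimately have "1 < (l+m)^2" by simp
  hence lm1: "l + m > 1" using l0 m0 by (smt (verit) one_power2 power_mono)
  define ww where "ww = w1^2+w2^2"
  have h1: "ww = 2*(w1*b1+w2*b2)" using wb nb unfolding ww_def by (simp add: power2_eq_square algebra_simps)
  have h2: "ww \<le> 2*(w1*a1+w2*a2)" using wa na unfolding ww_def by (simp add: power2_eq_square algebra_simps)
  have h3: "ww \<le> 2*(w1*c1+w2*c2)" using wc nc unfolding ww_def by (simp add: power2_eq_square algebra_simps)
  have "2*(w1*b1+w2*b2) = l*(2*(w1*a1+w2*a2)) + m*(2*(w1*c1+w2*c2))" using b by (simp add: algebra_simps)
  hence "ww \<ge> l*ww + m*ww" using h1 h2 h3 lm by (smt (verit) mult_left_mono)
  hence "(l+m-1)*ww \<le> 0" by (simp add: algebra_simps)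
  moreover have "ww \<ge> 0" unfolding ww_def by simp
  ultimately have "ww = 0" using lm1 by (smt (verit) mult_pos_pos)
  thus ?thesis unfolding ww_def by (simp add: sum_power2_eq_zero_iff)
qed

lemma solve_mid:
  fixes x y z al be ga :: real
  assumes "be \<noteq> 0" "al*x + be*y + ga*z = 0"
  shows "y = (-al/be)*x + (-ga/be)*z"
  using assms by (simp add: field_simps)

lemma cone3:
  fixes a1 a2 b1 b2 c1 c2 D :: real
  assumes na: "a1^2+a2^2 = D^2" and nb: "b1^2+b2^2 = D^2" and nc: "c1^2+c2^2 = D^2"
   and ac: "(a1,a2) \<noteq> (c1,c2)" and ba: "(b1,b2)\<noteq>(a1,a2)" and bc: "(b1,b2)\<noteq>(c1,c2)"
   and dab: "(a1-b1)^2+(a2-b2)^2 \<le> D^2" and dbc: "(b1-c1)^2+(b2-c2)^2 \<le> D^2"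
   and dac: "(a1-c1)^2+(a2-c2)^2 \<le> D^2"
  shows "(\<exists>l m. l\<ge>0 \<and> m\<ge>0 \<and> b1 = l*a1+m*c1 \<and> b2 = l*a2+m*c2) \<or>
         (\<exists>l m. l\<ge>0 \<and> m\<ge>0 \<and> a1 = l*b1+m*c1 \<and> a2 = l*b2+m*c2) \<or>
         (\<exists>l m. l\<ge>0 \<and> m\<ge>0 \<and> c1 = l*a1+m*b1 \<and> c2 = l*a2+m*b2)"
proof -
  have "D^2 \<noteq> 0" using ac na nc by auto
  hence D2: "D^2 > 0" by simp
  have ab: "a1*b1+a2*b2 > 0" using dab na nb D2 by (simp add: power2_eq_square algebra_simps)
  have bcp: "b1*c1+b2*c2 > 0" using dbc nb nc D2 by (simp add: power2_eq_square algebra_simps)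
  have acp: "a1*c1+a2*c2 > 0" using dac na nc D2 by (simp add: power2_eq_square algebra_simps)
  define al where "al = b1*c2 - b2*c1"
  define be where "be = c1*a2 - c2*a1"
  define ga where "ga = a1*b2 - a2*b1"
  have nz: "X1*Y2 - X2*Y1 \<noteq> 0"
    if nx: "X1^2+X2^2 = D^2" and ny: "Y1^2+Y2^2 = D^2" and xy: "(X1,X2) \<noteq> (Y1,Y2)"
      and p: "X1*Y1+X2*Y2 > 0" for X1 X2 Y1 Y2 :: real
  proof
    assume h: "X1*Y2 - X2*Y1 = 0"
    have "(X1*Y2 - X2*Y1)^2 + (X1*Y1+X2*Y2)^2 = (X1^2+X2^2)*(Y1^2+Y2^2)"
      by (simp add: power2_eq_square algebra_simps)
    hence "(X1*Y1+X2*Y2)^2 = (D^2)^2" using h nx ny by (simp add: power2_eq_square)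
    hence "X1*Y1+X2*Y2 = D^2" using p D2 power2_eq_iff_nonneg[of "X1*Y1+X2*Y2" "D^2"] by linarith
    hence "(X1-Y1)^2+(X2-Y2)^2 = 0" using nx ny by (simp add: power2_eq_square algebra_simps)
    hence "X1 = Y1 \<and> X2 = Y2" by (simp add: sum_power2_eq_zero_iff)
    thus False using xy by simp
  qed
  have al0: "al \<noteq> 0" unfolding al_def using nz[OF nb nc bc bcp] .
  have be0: "be \<noteq> 0" unfolding be_def using nz[OF nc na] ac acp by (auto simp: algebra_simps)
  have ga0: "ga \<noteq> 0" unfolding ga_def using nz[OF na nb] ba ab by (auto simp: algebra_simps)
  have i1: "al*a1 + be*b1 + ga*c1 = 0" unfolding al_def be_def ga_def by (simp add: algebra_simps)
  have i2: "al*a2 + be*b2 + ga*c2 = 0" unfolding al_def be_def ga_def by (simp add: algebra_simps)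
  have dot: "al*D^2 + be*(a1*b1+a2*b2) + ga*(a1*c1+a2*c2) = 0"
  proof -
    have "al*D^2 + be*(a1*b1+a2*b2) + ga*(a1*c1+a2*c2) = a1*(al*a1 + be*b1 + ga*c1) + a2*(al*a2 + be*b2 + ga*c2)"
      unfolding na[symmetric] by (simp add: power2_eq_square algebra_simps)
    thus ?thesis using i1 i2 by simp
  qed
  have notall: "\<not> (al > 0 \<and> be > 0 \<and> ga > 0)" "\<not> (al < 0 \<and> be < 0 \<and> ga < 0)"
  proof -
    show "\<not> (al > 0 \<and> be > 0 \<and> ga > 0)"
    proof
      assume "al > 0 \<and> be > 0 \<and> ga > 0"
      hence "al*D^2 + be*(a1*b1+a2*b2) + ga*(a1*c1+a2*c2) > 0" using D2 ab acp
        by (simp add: add_pos_pos)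
      thus False using dot by simp
    qed
    show "\<not> (al < 0 \<and> be < 0 \<and> ga < 0)"
    proof
      assume "al < 0 \<and> be < 0 \<and> ga < 0"
      hence "al*D^2 + be*(a1*b1+a2*b2) + ga*(a1*c1+a2*c2) < 0" using D2 ab acp
        by (simp add: add_neg_neg mult_neg_pos)
      thus False using dot by simp
    qed
  qed
  have mb: ?thesis if "0 \<le> -al/be" "0 \<le> -ga/be"
    using that solve_mid[OF be0 i1] solve_mid[OF be0 i2] by blast
  have ma: ?thesis if "0 \<le> -be/al" "0 \<le> -ga/al"
  proof -
    have "be*b1 + al*a1 + ga*c1 = 0" "be*b2 + al*a2 + ga*c2 = 0" using i1 i2 by (simp_all add: algebra_simps)
    thus ?thesis using that solve_mid[OF al0] by blast
  qed
  have mc: ?thesis if "0 \<le> -al/ga" "0 \<le> -be/ga"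
  proof -
    have "al*a1 + ga*c1 + be*b1 = 0" "al*a2 + ga*c2 + be*b2 = 0" using i1 i2 by (simp_all add: algebra_simps)
    thus ?thesis using that solve_mid[OF ga0] by blast
  qed
  show ?thesis
  proof (cases "al > 0")
    case True
    show ?thesis
    proof (cases "be > 0")
      case True
      hence "ga < 0" using \<open>al > 0\<close> notall ga0 by auto
      thus ?thesis using mc True \<open>al > 0\<close> by (simp add: divide_nonneg_neg divide_nonpos_neg)
    next
      case False
      hence "be < 0" using be0 by auto
      show ?thesis
      proof (cases "ga > 0")
        case True thus ?thesis using mb \<open>be < 0\<close> \<open>al > 0\<close> by (simp add: divide_nonneg_neg divide_nonpos_neg)
      next
        case False hence "ga < 0" using ga0 by auto
        thus ?thesis using ma \<open>be < 0\<close> \<open>al > 0\<close> by (simp add: divide_nonneg_pos divide_nonpos_pos)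
      qed
    qed
  next
    case False
    hence "al < 0" using al0 by auto
    show ?thesis
    proof (cases "be < 0")
      case True
      hence "ga > 0" using \<open>al < 0\<close> notall ga0 by auto
      thus ?thesis using mc True \<open>al < 0\<close> by (simp add: divide_nonneg_pos divide_nonpos_pos)
    next
      case False
      hence "be > 0" using be0 by auto
      show ?thesis
      proof (cases "ga < 0")
        case True thus ?thesis using mb \<open>be > 0\<close> \<open>al < 0\<close> by (simp add: divide_nonneg_pos divide_nonpos_pos)
      next
        case False hence "ga > 0" using ga0 by auto
        thus ?thesis using ma \<open>be > 0\<close> \<open>al < 0\<close> by (simp add: divide_nonneg_neg divide_nonpos_neg)
      qed
    qed
  qed
qed

definition sqd :: "('v \<Rightarrow> nat \<Rightarrow> real) \<Rightarrow> 'v \<Rightarrow> 'v \<Rightarrow> real" where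
  "sqd f x y = (f x 0 - f y 0)^2 + (f x 1 - f y 1)^2"

definition conf :: "'v set \<Rightarrow> ('v \<Rightarrow> 'v \<Rightarrow> bool) \<Rightarrow> ('v \<Rightarrow> nat \<Rightarrow> real) \<Rightarrow> real \<Rightarrow> bool" where
  "conf W E f D \<longleftrightarrow> inj_on (\<lambda>x. (f x 0, f x 1)) W \<and> (\<forall>x\<in>W. \<forall>y\<in>W. sqd f x y \<le> D^2) \<and>
     (\<forall>x\<in>W. \<forall>y\<in>W. x \<noteq> y \<longrightarrow> (E x y \<longleftrightarrow> sqd f x y = D^2))"

lemma sqd_sym: "sqd f x y = sqd f y x"
  unfolding sqd_def by (simp add: power2_commute)

lemma mid_graph:
  assumes c: "conf W E f D" and W: "v \<in> W" "x \<in> W" "y \<in> W" "z \<in> W"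
    and d: "v \<noteq> x" "v \<noteq> y" "v \<noteq> z" "x \<noteq> y" "x \<noteq> z" "y \<noteq> z"
    and e: "E v x" "E v y" "E v z"
    and lm: "l \<ge> 0" "m \<ge> 0" "f x 0 - f v 0 = l*(f y 0 - f v 0) + m*(f z 0 - f v 0)"
       "f x 1 - f v 1 = l*(f y 1 - f v 1) + m*(f z 1 - f v 1)"
    and w: "w \<in> W" "w \<noteq> x" "E x w"
  shows "w = v"
proof -
  from c have inj: "inj_on (\<lambda>x. (f x 0, f x 1)) W" and le: "\<And>a b. a\<in>W \<Longrightarrow> b\<in>W \<Longrightarrow> sqd f a b \<le> D^2"
    and eq: "\<And>a b. a\<in>W \<Longrightarrow> b\<in>W \<Longrightarrow> a \<noteq> b \<Longrightarrow> E a b \<longleftrightarrow> sqd f a b = D^2"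
    unfolding conf_def by auto
  have neq: "(f a 0 - f v 0, f a 1 - f v 1) \<noteq> (f b 0 - f v 0, f b 1 - f v 1)" if "a \<in> W" "b \<in> W" "a \<noteq> b" for a b
    using inj_onD[OF inj _ that(1,2)] that(3) by auto
  have nrm: "(f a 0 - f v 0)^2 + (f a 1 - f v 1)^2 = D^2" if "a \<in> W" "a \<noteq> v" "E v a" for a
    using eq[of v a] that W(1) sqd_sym[of f v a] unfolding sqd_def by auto
  have dif: "((f a 0 - f v 0) - (f b 0 - f v 0))^2 + ((f a 1 - f v 1) - (f b 1 - f v 1))^2 = sqd f a b" for a b
    unfolding sqd_def by simp
  have wx: "sqd f w x = D^2" using eq[of x w] w W sqd_sym[of f x w] by auto
  have "f w 0 - f v 0 = 0 \<and> f w 1 - f v 1 = 0"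
    apply (rule mid_zero[OF lm(3,4) lm(1,2) nrm[OF W(3) _ e(2)] nrm[OF W(2) _ e(1)] nrm[OF W(4) _ e(3)]
          neq[OF W(3,4) d(6)] neq[OF W(2,3) d(4)] neq[OF W(2,4) d(5)]])
    using d wx le[OF w(1) W(3)] le[OF w(1) W(4)] unfolding dif by auto
  hence "(f w 0, f w 1) = (f v 0, f v 1)" by simp
  thus ?thesis using inj_onD[OF inj _ w(1) W(1)] by simp
qed

lemma deg3:
  assumes c: "conf W E f D" and W: "v \<in> W" "a \<in> W" "b \<in> W" "cc \<in> W"
    and d: "v \<noteq> a" "v \<noteq> b" "v \<noteq> cc" "a \<noteq> b" "a \<noteq> cc" "b \<noteq> cc"
    and e: "E v a" "E v b" "E v cc"
  shows "\<exists>z\<in>{a,b,cc}. \<forall>w\<in>W. w \<noteq> z \<longrightarrow> E z w \<longrightarrow> w = v"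
proof -
  from c have inj: "inj_on (\<lambda>x. (f x 0, f x 1)) W" and le: "\<And>a b. a\<in>W \<Longrightarrow> b\<in>W \<Longrightarrow> sqd f a b \<le> D^2"
    and eq: "\<And>a b. a\<in>W \<Longrightarrow> b\<in>W \<Longrightarrow> a \<noteq> b \<Longrightarrow> E a b \<longleftrightarrow> sqd f a b = D^2"
    unfolding conf_def by auto
  have neq: "(f x 0 - f v 0, f x 1 - f v 1) \<noteq> (f y 0 - f v 0, f y 1 - f v 1)" if "x \<in> W" "y \<in> W" "x \<noteq> y" for x y
    using inj_onD[OF inj _ that(1,2)] that(3) by auto
  have nrm: "(f x 0 - f v 0)^2 + (f x 1 - f v 1)^2 = D^2" if "x \<in> W" "x \<noteq> v" "E v x" for x
    using eq[of v x] that W(1) sqd_sym[of f v x] unfolding sqd_def by auto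
  have dif: "((f x 0 - f v 0) - (f y 0 - f v 0))^2 + ((f x 1 - f v 1) - (f y 1 - f v 1))^2 = sqd f x y" for x y
    unfolding sqd_def by simp
  have "(\<exists>l m. l\<ge>0 \<and> m\<ge>0 \<and> f b 0 - f v 0 = l*(f a 0 - f v 0)+m*(f cc 0 - f v 0) \<and> f b 1 - f v 1 = l*(f a 1 - f v 1)+m*(f cc 1 - f v 1)) \<or>
         (\<exists>l m. l\<ge>0 \<and> m\<ge>0 \<and> f a 0 - f v 0 = l*(f b 0 - f v 0)+m*(f cc 0 - f v 0) \<and> f a 1 - f v 1 = l*(f b 1 - f v 1)+m*(f cc 1 - f v 1)) \<or>
         (\<exists>l m. l\<ge>0 \<and> m\<ge>0 \<and> f cc 0 - f v 0 = l*(f a 0 - f v 0)+m*(f b 0 - f v 0) \<and> f cc 1 - f v 1 = l*(f a 1 - f v 1)+m*(f b 1 - f v 1))"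
    apply (rule cone3[OF nrm[OF W(2) _ e(1)] nrm[OF W(3) _ e(2)] nrm[OF W(4) _ e(3)]
          neq[OF W(2,4) d(5)] neq[OF W(3,2)] neq[OF W(3,4) d(6)]])
    using d le W unfolding dif by auto
  thus ?thesis
  proof (elim disjE exE conjE)
    fix l m assume h: "l\<ge>0" "m\<ge>0" "f b 0 - f v 0 = l*(f a 0 - f v 0)+m*(f cc 0 - f v 0)" "f b 1 - f v 1 = l*(f a 1 - f v 1)+m*(f cc 1 - f v 1)"
    show ?thesis using mid_graph[OF c W(1,3,2,4) _ _ _ _ _ _ e(2,1,3) h] d by blast
  next
    fix l m assume h: "l\<ge>0" "m\<ge>0" "f a 0 - f v 0 = l*(f b 0 - f v 0)+m*(f cc 0 - f v 0)" "f a 1 - f v 1 = l*(f b 1 - f v 1)+m*(f cc 1 - f v 1)"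
    show ?thesis using mid_graph[OF c W(1,2,3,4) _ _ _ _ _ _ e(1,2,3) h] d by blast
  next
    fix l m assume h: "l\<ge>0" "m\<ge>0" "f cc 0 - f v 0 = l*(f a 0 - f v 0)+m*(f b 0 - f v 0)" "f cc 1 - f v 1 = l*(f a 1 - f v 1)+m*(f b 1 - f v 1)"
    show ?thesis using mid_graph[OF c W(1,4,2,3) _ _ _ _ _ _ e(3,1,2) h] d by blast
  qed
qed




lemma card_filter_sum:
  assumes "finite A"
  shows "card {x\<in>A. P x} = (\<Sum>x\<in>A. if P x then 1 else (0::nat))"
  using sum.inter_filter[OF assms, of "\<lambda>_. 1::nat" P, symmetric] by simp

lemma handshake:
  assumes S: "finite S" and ES: "\<And>e. e \<in> ES \<Longrightarrow> card e = 2 \<and> e \<subseteq> S"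
  shows "(\<Sum>x\<in>S. card {e\<in>ES. x \<in> e}) = 2 * card ES"
proof -
  have "ES \<subseteq> Pow S" using ES by auto
  hence fES: "finite ES" using S by (meson finite_Pow_iff finite_subset)
  have "(\<Sum>x\<in>S. card {e\<in>ES. x \<in> e}) = (\<Sum>x\<in>S. \<Sum>e\<in>ES. if x \<in> e then 1 else 0)"
    by (rule sum.cong) (rule refl, rule card_filter_sum[OF fES])
  also have "\<dots> = (\<Sum>e\<in>ES. \<Sum>x\<in>S. if x \<in> e then 1 else 0)" by (rule sum.swap)
  also have "\<dots> = (\<Sum>e\<in>ES. 2)"
  proof (rule sum.cong)
    fix e assume e: "e \<in> ES"
    have "(\<Sum>x\<in>S. if x \<in> e then 1 else 0) = card {x\<in>S. x\<in>e}"
      by (rule card_filter_sum[OF S, symmetric])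
    also have "{x\<in>S. x\<in>e} = e" using ES[OF e] by auto
    finally show "(\<Sum>x\<in>S. if x \<in> e then 1 else 0) = (2::nat)" using ES[OF e] by simp
  qed (rule refl)
  finally show ?thesis by simp
qed

lemma edges_at:
  assumes "\<forall>e\<in>Ed. card e = 2" "x \<in> S"
  shows "{e\<in>Ed. e \<subseteq> S \<and> x \<in> e} = (\<lambda>y. {x,y}) ` {y\<in>S. adj Ed x y}"
proof
  show "{e\<in>Ed. e \<subseteq> S \<and> x \<in> e} \<subseteq> (\<lambda>y. {x,y}) ` {y\<in>S. adj Ed x y}"
  proof
    fix e assume e: "e \<in> {e\<in>Ed. e \<subseteq> S \<and> x \<in> e}"
    then obtain a b where ab: "e = {a,b}" "a \<noteq> b" using assms(1) by (auto simp: card_2_iff)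
    then obtain y where y: "e = {x,y}" "y \<noteq> x" using e by auto
    thus "e \<in> (\<lambda>y. {x,y}) ` {y\<in>S. adj Ed x y}" using e by (auto simp: adj_def)
  qed
  show "(\<lambda>y. {x,y}) ` {y\<in>S. adj Ed x y} \<subseteq> {e\<in>Ed. e \<subseteq> S \<and> x \<in> e}"
    using assms(2) by (auto simp: adj_def)
qed

lemma card_edges_at:
  assumes "\<forall>e\<in>Ed. card e = 2" "x \<in> S" "finite S"
  shows "card {e\<in>Ed. e \<subseteq> S \<and> x \<in> e} = card {y\<in>S. adj Ed x y}"
proof -
  have "inj_on (\<lambda>y. {x,y}) {y\<in>S. adj Ed x y}"
  proof (rule inj_onI)
    fix y1 y2 assume h: "y1 \<in> {y\<in>S. adj Ed x y}" "y2 \<in> {y\<in>S. adj Ed x y}" "{x,y1} = {x,y2}"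
    have "x \<noteq> y1" "x \<noteq> y2" using h(1,2) unfolding adj_def by auto
    thus "y1 = y2" using h(3) doubleton_eq_iff[of x y1 x y2] by blast
  qed
  hence "card ((\<lambda>y. {x,y}) ` {y\<in>S. adj Ed x y}) = card {y\<in>S. adj Ed x y}" by (rule card_image)
  thus ?thesis unfolding edges_at[OF assms(1,2)] .
qed

lemma HP:
  assumes c: "conf W (adj Ed) f D" and two: "\<forall>e\<in>Ed. card e = 2"
  shows "finite S \<Longrightarrow> S \<subseteq> W \<Longrightarrow> card {e\<in>Ed. e \<subseteq> S} \<le> card S"
proof (induction "card S" arbitrary: S rule: less_induct)
  case less
  define N where "N x = {y\<in>S. adj Ed x y}" for x
  have fN: "finite (N x)" for x unfolding N_def using less.prems by auto
  show ?case
  proof (cases "\<exists>x\<in>S. card (N x) \<le> 1")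
    case True
    then obtain x where x: "x \<in> S" "card (N x) \<le> 1" by blast
    have eqU: "{e\<in>Ed. e \<subseteq> S} = {e\<in>Ed. e \<subseteq> S - {x}} \<union> {e\<in>Ed. e \<subseteq> S \<and> x \<in> e}" by auto
    have "card {e\<in>Ed. e \<subseteq> S} \<le> card {e\<in>Ed. e \<subseteq> S - {x}} + card {e\<in>Ed. e \<subseteq> S \<and> x \<in> e}"
      unfolding eqU by (rule card_Un_le)
    also have "card {e\<in>Ed. e \<subseteq> S \<and> x \<in> e} = card (N x)"
      unfolding N_def using card_edges_at[OF two x(1) less.prems(1)] .
    also have "card {e\<in>Ed. e \<subseteq> S - {x}} \<le> card (S - {x})"
    proof (rule less.hyps)
      show "card (S - {x}) < card S" using less.prems(1) x(1) by (rule card_Diff1_less)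
    qed (use less.prems in auto)
    finally have "card {e\<in>Ed. e \<subseteq> S} \<le> card (S - {x}) + card (N x)" by simp
    moreover have "card (S - {x}) + 1 = card S" using x(1) less.prems(1)
    proof -
      have "card S > 0" using x(1) less.prems(1) card_gt_0_iff by blast
      thus ?thesis using x(1) less.prems(1) by (simp add: card_Diff_singleton)
    qed
    ultimately show ?thesis using x(2) by linarith
  next
    case False
    hence ge2: "\<forall>x\<in>S. card (N x) \<ge> 2" by auto
    have le2: "card (N x) \<le> 2" if x: "x \<in> S" for x
    proof (rule ccontr)
      assume "\<not> card (N x) \<le> 2"
      hence "3 \<le> card (N x)" by simp
      then obtain T where T: "T \<subseteq> N x" "card T = 3" by (rule obtain_subset_with_card_n)
      from T(2) obtain a b cc where abc: "T = {a,b,cc}" "a \<noteq> b" "b \<noteq> cc" "a \<noteq> cc" unfolding card_3_iff by blast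
      have inS: "a \<in> S" "b \<in> S" "cc \<in> S" and ad: "adj Ed x a" "adj Ed x b" "adj Ed x cc"
        using T abc unfolding N_def by auto
      have xn: "x \<noteq> a" "x \<noteq> b" "x \<noteq> cc" using ad by (auto simp: adj_def)
      obtain z where z: "z \<in> {a,b,cc}" "\<forall>w\<in>W. w \<noteq> z \<longrightarrow> adj Ed z w \<longrightarrow> w = x"
        using deg3[OF c _ _ _ _ xn abc(2) abc(4) abc(3) ad] inS x less.prems(2) by (meson subsetD)
      have "N z \<subseteq> {x}" using z less.prems(2) unfolding N_def by (auto simp: adj_def)
      hence "card (N z) \<le> card {x}" by (intro card_mono) auto
      hence "card (N z) \<le> 1" by simp
      moreover have "z \<in> S" using z(1) inS by auto
      moreover have "2 \<le> card (N z)" using ge2 \<open>z \<in> S\<close> by blast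
      ultimately show False by linarith
    qed
    have "2 * card {e\<in>Ed. e \<subseteq> S} = (\<Sum>x\<in>S. card {e\<in>{e\<in>Ed. e \<subseteq> S}. x \<in> e})"
      by (rule handshake[symmetric]) (use less.prems two in auto)
    also have "\<dots> = (\<Sum>x\<in>S. card (N x))"
    proof (rule sum.cong)
      fix x assume "x \<in> S"
      have "{e\<in>{e\<in>Ed. e \<subseteq> S}. x \<in> e} = {e\<in>Ed. e \<subseteq> S \<and> x \<in> e}" by auto
      thus "card {e\<in>{e\<in>Ed. e \<subseteq> S}. x \<in> e} = card (N x)"
        unfolding N_def using card_edges_at[OF two \<open>x \<in> S\<close> less.prems(1)] by simp
    qed simp
    also have "\<dots> \<le> (\<Sum>x\<in>S. 2)" by (rule sum_mono) (use le2 in auto)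
    finally show ?thesis by simp
  qed
qed

lemma dist2: "euclid_dist 2 x y = sqrt ((x 0 - y 0)^2 + (x 1 - y 1)^2)"
  unfolding euclid_dist_def by (simp add: numeral_2_eq_2)

lemma diam_conf:
  assumes d: "is_diameter_graph 2 W E" and fin: "finite W"
  shows "\<exists>f D. conf W E f D"
proof -
  obtain f where f: "\<forall>v\<in>W. point_in_R 2 (f v)" "inj_on f W"
    "\<forall>x\<in>W. \<forall>y\<in>W. x \<noteq> y \<longrightarrow> (E x y \<longleftrightarrow> euclid_dist 2 (f x) (f y) = diam_R 2 (f ` W))"
    using d unfolding is_diameter_graph_def by blast
  define D where "D = diam_R 2 (f ` W)"
  have ed: "euclid_dist 2 (f x) (f y) = sqrt (sqd f x y)" for x y
    unfolding dist2 sqd_def ..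
  have inj: "inj_on (\<lambda>x. (f x 0, f x 1)) W"
  proof (rule inj_onI)
    fix x y assume xy: "x \<in> W" "y \<in> W" "(f x 0, f x 1) = (f y 0, f y 1)"
    have "f x = f y"
    proof
      fix i show "f x i = f y i"
      proof (cases "i < 2")
        case True hence "i = 0 \<or> i = 1" by auto
        thus ?thesis using xy(3) by auto
      next
        case False thus ?thesis using f(1) xy(1,2) unfolding point_in_R_def by auto
      qed
    qed
    thus "x = y" using inj_onD[OF f(2) _ xy(1,2)] by simp
  qed
  define M where "M = {euclid_dist 2 a b |a b. a \<in> f ` W \<and> b \<in> f ` W}"
  have "M = (\<lambda>(a,b). euclid_dist 2 a b) ` (f ` W \<times> f ` W)" unfolding M_def by auto
  hence finM: "finite M" using fin by simp
  have le: "euclid_dist 2 (f x) (f y) \<le> D" if "x \<in> W" "y \<in> W" for x y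
    unfolding D_def diam_R_def M_def[symmetric]
    by (rule Max_ge[OF finM]) (use that in \<open>auto simp: M_def\<close>)
  have sq_le: "sqd f x y \<le> D^2" if "x \<in> W" "y \<in> W" for x y
  proof -
    have "sqrt (sqd f x y) \<le> D" using le[OF that] ed by simp
    moreover have "sqd f x y \<ge> 0" unfolding sqd_def by simp
    ultimately have "(sqrt (sqd f x y))^2 \<le> D^2" by (intro power_mono) auto
    thus ?thesis using \<open>sqd f x y \<ge> 0\<close> by simp
  qed
  have eqv: "E x y \<longleftrightarrow> sqd f x y = D^2" if "x \<in> W" "y \<in> W" "x \<noteq> y" for x y
  proof -
    have "0 \<le> euclid_dist 2 (f x) (f x)" unfolding ed sqd_def by simp
    hence D0: "D \<ge> 0" using le[OF that(1) that(1)] by linarith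
    have s0: "sqd f x y \<ge> 0" unfolding sqd_def by simp
    have "E x y \<longleftrightarrow> sqrt (sqd f x y) = D" using f(3) that ed D_def by simp
    also have "\<dots> \<longleftrightarrow> sqd f x y = D^2"
    proof
      assume h: "sqrt (sqd f x y) = D"
      have "sqd f x y = (sqrt (sqd f x y))^2" using s0 by simp
      thus "sqd f x y = D^2" unfolding h .
    next
      assume "sqd f x y = D^2" thus "sqrt (sqd f x y) = D" using D0 by simp
    qed
    finally show ?thesis .
  qed
  have "conf W E f D" unfolding conf_def using inj sq_le eqv by blast
  thus ?thesis by blast
qed




definition wt :: "nat \<Rightarrow> real \<Rightarrow> nat set set \<Rightarrow> real" where
  "wt n p Ed = p ^ card Ed * (1 - p) ^ (card (all_edges n) - card Ed)"

lemma prob_wt: "prob_Gnp n p Q = (\<Sum>Ed\<in>Pow (all_edges n). if Q Ed then wt n p Ed else 0)"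
  unfolding prob_Gnp_def wt_def ..

lemma wt_nonneg: "0 \<le> p \<Longrightarrow> p \<le> 1 \<Longrightarrow> 0 \<le> wt n p Ed"
  unfolding wt_def by simp

lemma finite_all_edges: "finite (all_edges n)"
  unfolding all_edges_def by (rule finite_subset[of _ "Pow {..<n}"]) auto

lemma prob_mono:
  assumes "0 \<le> p" "p \<le> 1" "\<And>Ed. Ed \<subseteq> all_edges n \<Longrightarrow> Q Ed \<Longrightarrow> R Ed"
  shows "prob_Gnp n p Q \<le> prob_Gnp n p R"
  unfolding prob_wt by (rule sum_mono) (use assms wt_nonneg in auto)

lemma prob_union:
  assumes p: "0 \<le> p" "p \<le> 1" and I: "finite I"
    and h: "\<And>Ed. Ed \<subseteq> all_edges n \<Longrightarrow> Q Ed \<Longrightarrow> \<exists>i\<in>I. R i Ed"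
  shows "prob_Gnp n p Q \<le> (\<Sum>i\<in>I. prob_Gnp n p (R i))"
proof -
  have "(\<Sum>i\<in>I. prob_Gnp n p (R i)) =
        (\<Sum>Ed\<in>Pow (all_edges n). \<Sum>i\<in>I. if R i Ed then wt n p Ed else 0)"
    unfolding prob_wt by (rule sum.swap)
  moreover have "prob_Gnp n p Q \<le> (\<Sum>Ed\<in>Pow (all_edges n). \<Sum>i\<in>I. if R i Ed then wt n p Ed else 0)"
    unfolding prob_wt
  proof (rule sum_mono)
    fix Ed assume Ed: "Ed \<in> Pow (all_edges n)"
    show "(if Q Ed then wt n p Ed else 0) \<le> (\<Sum>i\<in>I. if R i Ed then wt n p Ed else 0)"
    proof (cases "Q Ed")
      case True
      then obtain i where i: "i \<in> I" "R i Ed" using h Ed by blast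
      have "(if R i Ed then wt n p Ed else 0) \<le> (\<Sum>i\<in>I. if R i Ed then wt n p Ed else 0)"
        by (rule member_le_sum) (use i I wt_nonneg[OF p] in auto)
      thus ?thesis using True i by simp
    next
      case False thus ?thesis by (simp add: sum_nonneg wt_nonneg[OF p])
    qed
  qed
  ultimately show ?thesis by simp
qed

lemma prod_if_const: "finite X \<Longrightarrow> (\<Prod>x\<in>X. if x \<in> B then t else 1) = (t::real) ^ card (X \<inter> B)"
  by (simp add: prod.If_cases Int_def)

lemma gen_fun:
  assumes B: "B \<subseteq> all_edges n" and p: "0 \<le> p" "p \<le> 1"
  shows "(\<Sum>Ed\<in>Pow (all_edges n). t ^ card (Ed \<inter> B) * wt n p Ed) = (p*t + (1-p)) ^ card B"
proof -
  let ?A = "all_edges n"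
  have fA: "finite ?A" by (rule finite_all_edges)
  have "(\<Prod>x\<in>?A. p * (if x \<in> B then t else 1) + (1-p)) =
        (\<Sum>X\<in>Pow ?A. (\<Prod>x\<in>X. p * (if x \<in> B then t else 1)) * (\<Prod>x\<in>?A-X. (1-p)))"
    by (rule prod_add[OF fA])
  also have "\<dots> = (\<Sum>Ed\<in>Pow ?A. t ^ card (Ed \<inter> B) * wt n p Ed)"
  proof (rule sum.cong)
    fix X assume X: "X \<in> Pow ?A"
    hence fX: "finite X" using fA finite_subset by blast
    have "(\<Prod>x\<in>X. p * (if x \<in> B then t else 1)) = p ^ card X * t ^ card (X \<inter> B)"
      by (simp add: prod.distrib prod_if_const[OF fX])
    moreover have "(\<Prod>x\<in>?A-X. (1-p)) = (1-p) ^ (card ?A - card X)"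
      using X fX by (simp add: card_Diff_subset)
    ultimately show "(\<Prod>x\<in>X. p * (if x \<in> B then t else 1)) * (\<Prod>x\<in>?A-X. (1-p)) = t ^ card (X \<inter> B) * wt n p X"
      unfolding wt_def by simp
  qed simp
  finally have 1: "(\<Sum>Ed\<in>Pow ?A. t ^ card (Ed \<inter> B) * wt n p Ed) = (\<Prod>x\<in>?A. p * (if x \<in> B then t else 1) + (1-p))" ..
  have "(\<Prod>x\<in>?A. p * (if x \<in> B then t else 1) + (1-p)) = (\<Prod>x\<in>?A. if x \<in> B then p*t + (1-p) else 1)"
    by (rule prod.cong) auto
  also have "\<dots> = (p*t + (1-p)) ^ card B"
  proof -
    have "B \<inter> ?A = B" using B by auto
    thus ?thesis using prod_if_const[OF fA, of B "p*t + (1-p)"] by (simp add: inf_commute)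
  qed
  finally show ?thesis using 1 by simp
qed

lemma chernoff:
  assumes B: "B \<subseteq> all_edges n" and p: "0 \<le> p" "p \<le> 1" and t: "0 < t" "t \<le> 1"
  shows "prob_Gnp n p (\<lambda>Ed. card (Ed \<inter> B) \<le> m) \<le> (p*t + (1-p)) ^ card B / t ^ m"
proof -
  have "prob_Gnp n p (\<lambda>Ed. card (Ed \<inter> B) \<le> m) \<le> (\<Sum>Ed\<in>Pow (all_edges n). t ^ card (Ed \<inter> B) * wt n p Ed / t ^ m)"
    unfolding prob_wt
  proof (rule sum_mono)
    fix Ed
    show "(if card (Ed \<inter> B) \<le> m then wt n p Ed else 0) \<le> t ^ card (Ed \<inter> B) * wt n p Ed / t ^ m"
    proof (cases "card (Ed \<inter> B) \<le> m")
      case True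
      have "t ^ m \<le> t ^ card (Ed \<inter> B)" by (rule power_decreasing[OF True]) (use t in auto)
      hence "1 \<le> t ^ card (Ed \<inter> B) / t ^ m" using t by simp
      hence "wt n p Ed * 1 \<le> wt n p Ed * (t ^ card (Ed \<inter> B) / t ^ m)"
        by (rule mult_left_mono) (rule wt_nonneg[OF p])
      thus ?thesis using True by (simp add: mult.commute)
    next
      case False thus ?thesis using t wt_nonneg[OF p] by simp
    qed
  qed
  also have "\<dots> = (\<Sum>Ed\<in>Pow (all_edges n). t ^ card (Ed \<inter> B) * wt n p Ed) / t ^ m"
    by (simp add: sum_divide_distrib)
  also have "\<dots> = (p*t + (1-p)) ^ card B / t ^ m" using gen_fun[OF B p] by simp
  finally show ?thesis .
qed

lemma sparse_bound:
  assumes p: "0 \<le> p" "p \<le> 1" and t: "0 < t" "t \<le> 1"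
  shows "prob_Gnp n p (\<lambda>Ed. \<exists>S\<subseteq>{..<n}. card S = k \<and> card {e\<in>Ed. e \<subseteq> S} \<le> m)
          \<le> real (n choose k) * ((p*t + (1-p)) ^ (k choose 2) / t ^ m)"
proof -
  define I where "I = {S. S \<subseteq> {..<n} \<and> card S = k}"
  have fI: "finite I" unfolding I_def by (rule finite_subset[of _ "Pow {..<n}"]) auto
  have cI: "card I = n choose k" unfolding I_def using n_subsets[of "{..<n}" k] by simp
  have "prob_Gnp n p (\<lambda>Ed. \<exists>S\<subseteq>{..<n}. card S = k \<and> card {e\<in>Ed. e \<subseteq> S} \<le> m)
        \<le> (\<Sum>S\<in>I. prob_Gnp n p (\<lambda>Ed. card {e\<in>Ed. e \<subseteq> S} \<le> m))"
    by (rule prob_union[OF p fI]) (auto simp: I_def)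
  also have "\<dots> \<le> (\<Sum>S\<in>I. (p*t + (1-p)) ^ (k choose 2) / t ^ m)"
  proof (rule sum_mono)
    fix S assume S: "S \<in> I"
    define B where "B = {e\<in>all_edges n. e \<subseteq> S}"
    have BA: "B \<subseteq> all_edges n" unfolding B_def by auto
    have "B = {e. e \<subseteq> S \<and> card e = 2}" using S unfolding B_def I_def all_edges_def by auto
    hence cB: "card B = k choose 2" using n_subsets[of S 2] S unfolding I_def
      by (simp add: finite_subset[of S "{..<n}"])
    have "prob_Gnp n p (\<lambda>Ed. card {e\<in>Ed. e \<subseteq> S} \<le> m) \<le> prob_Gnp n p (\<lambda>Ed. card (Ed \<inter> B) \<le> m)"
    proof (rule prob_mono[OF p])
      fix Ed assume "Ed \<subseteq> all_edges n" "card {e\<in>Ed. e \<subseteq> S} \<le> m"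
      moreover have "{e\<in>Ed. e \<subseteq> S} = Ed \<inter> B" using \<open>Ed \<subseteq> all_edges n\<close> unfolding B_def by auto
      ultimately show "card (Ed \<inter> B) \<le> m" by simp
    qed
    also have "\<dots> \<le> (p*t + (1-p)) ^ card B / t ^ m" by (rule chernoff[OF BA p t])
    finally show "prob_Gnp n p (\<lambda>Ed. card {e\<in>Ed. e \<subseteq> S} \<le> m) \<le> (p*t + (1-p)) ^ (k choose 2) / t ^ m"
      using cB by simp
  qed
  also have "\<dots> = real (n choose k) * ((p*t + (1-p)) ^ (k choose 2) / t ^ m)" using cI by simp
  finally show ?thesis .
qed




lemma pow_le_exp_fact: "(x::real) \<ge> 0 \<Longrightarrow> x ^ k \<le> exp x * fact k"
proof -
  assume x: "x \<ge> 0"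
  have s: "(\<lambda>n. x^n / fact n) sums exp x" using exp_converges[of x] by (simp add: divide_inverse mult.commute)
  have "sum (\<lambda>n. x^n / fact n) {k} \<le> suminf (\<lambda>n. x^n / fact n)"
    by (rule sum_le_suminf) (use s x in \<open>auto simp: sums_iff\<close>)
  hence "x^k / fact k \<le> exp x" using s by (simp add: sums_iff)
  thus ?thesis by (simp add: divide_le_eq mult.commute)
qed

lemma real_choose_two: "real (k choose 2) = real k * (real k - 1) / 2"
proof (cases k)
  case 0 thus ?thesis by simp
next
  case (Suc j)
  have "even (k * (k - 1))"
  proof (cases "even k")
    case True thus ?thesis by simp
  next
    case False
    then obtain j where "k = 2*j+1" using oddE by blast
    thus ?thesis by simp
  qed
  hence "real (k * (k - 1) div 2) = real (k * (k-1)) / 2" by (simp add: real_of_nat_div)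
  thus ?thesis using Suc by (simp add: choose_two of_nat_diff algebra_simps)
qed

lemma numeric:
  fixes n k :: nat and p q t :: real
  assumes p: "0 < p" "p < 1" and q: "q = 1 - p" and k: "k \<ge> 3"
    and t: "t = 2*q/((real k - 1)*p)"
    and H: "ln (real n * p) + 2 - ((real k - 3)/2) * ln (1/q) \<le> -1"
  shows "real (n choose k) * ((p*t + q) ^ (k choose 2) / t ^ k) \<le> 1/2"
proof (cases "k \<le> n")
  case False thus ?thesis by (simp add: binomial_eq_0)
next
  case True
  have q0: "q > 0" using p q by simp
  have k1: "real k - 1 > 0" using k by simp
  have t0: "t > 0" using t q0 k1 p by simp
  have n0: "real n > 0" using True k by simp
  define C where "C = real (n choose k)"
  have C0: "C > 0" unfolding C_def using True by simp
  define N where "N = real (k choose 2)"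
  have N: "N = real k * (real k - 1) / 2" unfolding N_def by (rule real_choose_two)
  define A where "A = p*t + q"
  have A: "A = q * (1 + 2/(real k - 1))" unfolding A_def t using p k1 by (simp add: field_simps)
  have "1 + 2/(real k - 1) > 0" using k1 by (simp add: add_pos_pos)
  hence A0: "A > 0" using A q0 by simp
  define X where "X = C * (A ^ (k choose 2) / t ^ k)"
  have X0: "X > 0" unfolding X_def using C0 A0 t0 by simp
  have lnX: "ln X = ln C + N * ln A - real k * ln t"
    unfolding X_def N_def using C0 A0 t0 by (simp add: ln_mult ln_div ln_realpow)
  have "real (n choose k) * fact k \<le> real n ^ k"
    using binomial_fact_pow[of n k] by (metis of_nat_fact of_nat_le_iff of_nat_mult of_nat_power)
  hence "ln (C * fact k) \<le> ln (real n ^ k)" unfolding C_def using C0 C_def by (subst ln_le_cancel_iff) auto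
  hence lC: "ln C + ln (fact k) \<le> real k * ln (real n)" using C0 by (simp add: ln_mult ln_realpow)
  have "ln (real k ^ k) \<le> ln (exp (real k) * fact k)"
    using pow_le_exp_fact[of "real k" k] k by (subst ln_le_cancel_iff) auto
  hence lF: "real k * ln (real k) \<le> real k + ln (fact k)" by (simp add: ln_mult ln_realpow)
  have "ln A = ln q + ln (1 + 2/(real k - 1))" unfolding A using q0 \<open>1 + 2/(real k - 1) > 0\<close> by (simp add: ln_mult)
  also have "\<dots> \<le> ln q + 2/(real k - 1)" using ln_add_one_self_le_self[of "2/(real k - 1)"] k1 by simp
  finally have lA: "N * ln A \<le> N * ln q + real k"
  proof -
    assume h: "ln A \<le> ln q + 2 / (real k - 1)"
    have N0: "N \<ge> 0" unfolding N_def by simp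
    have "N * ln A \<le> N * (ln q + 2 / (real k - 1))" by (rule mult_left_mono[OF h N0])
    also have "\<dots> = N * ln q + real k" unfolding N using k1 by (simp add: field_simps)
    finally show ?thesis .
  qed
  have lt: "ln t = ln 2 + ln q - ln (real k - 1) - ln p" unfolding t using q0 k1 p by (simp add: ln_mult ln_div)
  have lk: "ln (real k - 1) \<le> ln (real k)" using k1 by simp
  have "ln X \<le> real k * ln (real n) - real k * ln (real k) + real k + N * ln q + real k
               + real k * (ln (real k) + ln p - ln 2 - ln q)"
  proof -
    have "- (real k * ln t) \<le> real k * (ln (real k) + ln p - ln 2 - ln q)"
      unfolding lt using lk by (simp add: algebra_simps mult_left_mono)
    thus ?thesis using lnX lC lF lA by linarith
  qed
  also have "\<dots> = real k * (ln (real n * p) + 2 - ln 2 - ((real k - 3)/2) * ln (1/q))"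
    unfolding N using n0 p q0 by (simp add: ln_mult ln_div algebra_simps add_divide_distrib[symmetric])
  also have "\<dots> \<le> real k * (-1)"
  proof (rule mult_left_mono)
    show "ln (real n * p) + 2 - ln 2 - (real k - 3) / 2 * ln (1 / q) \<le> -1"
    proof -
      have "ln (2::real) \<ge> 0" by simp
      thus ?thesis using H by linarith
    qed
  qed simp
  also have "\<dots> \<le> -1" using k by simp
  finally have "ln X \<le> -1" .
  hence "X \<le> exp (-1)" using X0 by (metis exp_ln exp_le_cancel_iff)
  also have "exp (-1::real) \<le> 1/2"
  proof -
    have "2 \<le> exp (1::real)" using exp_ge_add_one_self[of 1] by simp
    thus ?thesis by (simp add: exp_minus field_simps)
  qed
  finally show ?thesis unfolding X_def C_def A_def .
qed




lemma good_sparse: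
  assumes g: "good_set 2 conn Ed W" and Ed: "Ed \<subseteq> all_edges n" and W: "W \<subseteq> {..<n}" and S: "S \<subseteq> W"
  shows "card {e\<in>Ed. e \<subseteq> S} \<le> card S"
proof -
  have fW: "finite W" using W finite_subset by blast
  have "is_diameter_graph 2 W (adj Ed)" using g unfolding good_set_def by simp
  then obtain f D where c: "conf W (adj Ed) f D" using diam_conf[OF _ fW] by blast
  have two: "\<forall>e\<in>Ed. card e = 2" using Ed unfolding all_edges_def by auto
  show ?thesis using HP[OF c two] S fW finite_subset by blast
qed

lemma ln_le_small:
  fixes y e :: real
  assumes y: "y \<ge> 1" and e: "e > 0" and ye: "y \<ge> 4 / e^2"
  shows "ln y \<le> e * y"
proof -
  have s0: "sqrt y > 0" using y by simp
  have "ln y = 2 * ln (sqrt y)" using y by (simp add: ln_sqrt)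
  also have "\<dots> \<le> 2 * (sqrt y - 1)" using ln_le_minus_one[OF s0] by simp
  also have "\<dots> \<le> 2 * sqrt y" by simp
  also have "\<dots> \<le> e * sqrt y * sqrt y"
  proof -
    have "(2/e)^2 \<le> (sqrt y)^2" using ye y by (simp add: power_divide)
    hence "2/e \<le> sqrt y" using power2_le_imp_le s0 by (metis less_imp_le)
    hence "2 \<le> e * sqrt y" using e by (simp add: divide_le_eq mult.commute)
    thus ?thesis using s0 by (simp add: mult_right_mono)
  qed
  also have "\<dots> = e * y" using y by (simp add: mult.assoc)
  finally show ?thesis .
qed

lemma main_n:
  fixes p d :: real and n :: nat
  assumes p: "0 \<le> p" "p \<le> 1" and d: "0 < d" "d \<le> 1/4"
    and h1: "(1-p) * ln (real n) \<ge> 1"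
    and h2: "real n * p \<ge> exp (12/d)"
    and h3: "ln (ln (real n)) \<le> (d/3) * (ln (real n) - ln 2)"
  shows "real (u_gen 2 conn n p) \<le> (2+2*d) * log (1/(1-p)) (real n * p) \<and> log (1/(1-p)) (real n * p) > 0"
proof -
  define q where "q = 1 - p"
  have lnn0: "ln (real n) \<ge> 0" by (cases n) auto
  have q0: "q > 0"
  proof (rule ccontr)
    assume "\<not> q > 0" hence "q = 0" using p q_def by auto
    thus False using h1 q_def by simp
  qed
  have q1: "q \<le> 1" using p q_def by simp
  have lnn1: "ln (real n) \<ge> 1"
  proof -
    have "q * ln (real n) \<le> 1 * ln (real n)" by (rule mult_right_mono[OF q1 lnn0])
    thus ?thesis using h1 q_def by simp
  qed
  have np0: "real n * p > 0" using h2 exp_gt_zero[of "12/d"] by linarith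
  hence p0: "p > 0" using p by (cases "p = 0") auto
  have p1: "p < 1" using q0 q_def by simp
  have q1': "q < 1" using p0 q_def by simp
  define X where "X = real n * p"
  define Q where "Q = ln (1/q)"
  have Q0: "Q > 0" unfolding Q_def using q0 q1' by simp
  have lX: "ln X \<ge> 12/d" unfolding X_def using h2 np0 by (metis ln_exp ln_le_cancel_iff exp_gt_zero)
  have "12/d > 0" using d by simp
  hence lXpos: "ln X > 0" using lX by linarith
  have QX: "Q \<le> (d/3) * ln X"
  proof (cases "p \<le> 1/2")
    case True
    hence "1/q \<le> 2" using q0 q_def by (simp add: divide_le_eq)
    hence "Q \<le> ln 2" unfolding Q_def using q0 by simp
    also have "ln (2::real) \<le> 1" using ln_le_minus_one[of 2] by simp
    also have "1 \<le> (d/3) * ln X"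
    proof -
      have "(d/3) * (12/d) \<le> (d/3) * ln X" by (rule mult_left_mono[OF lX]) (use d in simp)
      thus ?thesis using d by simp
    qed
    finally show ?thesis .
  next
    case False
    have "1/q \<le> ln (real n)" using h1 q0 q_def by (simp add: divide_le_eq mult.commute)
    hence "Q \<le> ln (ln (real n))" unfolding Q_def using q0 lnn1 by (subst ln_le_cancel_iff) auto
    also have "\<dots> \<le> (d/3) * (ln (real n) - ln 2)" by (rule h3)
    also have "ln (real n) - ln 2 \<le> ln X"
    proof -
      have n0: "real n > 0" using np0 p0 by (simp add: zero_less_mult_iff)
      have "real n / 2 \<le> X" unfolding X_def using False n0 by simp
      hence "ln (real n / 2) \<le> ln X" using n0 by simp
      thus ?thesis using n0 by (simp add: ln_div)
    qed
    hence "(d/3) * (ln (real n) - ln 2) \<le> (d/3) * ln X" using d by simp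
    finally show ?thesis .
  qed
  define L where "L = ln X / Q"
  have L0: "L > 0" unfolding L_def using lXpos Q0 by simp
  have logL: "log (1/(1-p)) (real n * p) = L" unfolding L_def log_def X_def Q_def q_def ..
  define k0 where "k0 = nat \<lceil>(2+2*d) * L\<rceil>"
  have k0ge: "real k0 \<ge> (2+2*d) * L" unfolding k0_def by linarith
  have x0: "0 \<le> (2+2*d)*L" using L0 d by simp
  have "real k0 = real_of_int \<lceil>(2+2*d) * L\<rceil>" unfolding k0_def using x0 by simp
  hence k0lt: "real k0 < (2+2*d) * L + 1" by linarith
  have LQ: "L * Q = ln X" unfolding L_def using Q0 by simp
  have L6: "L \<ge> 3/d"
  proof -
    have "Q * (3/d) \<le> ln X" using QX d by (simp add: field_simps)
    thus ?thesis unfolding L_def using Q0 by (simp add: field_simps)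
  qed
  have k0_3: "real k0 \<ge> 24"
  proof -
    have "3/d \<ge> 12" using d by (simp add: field_simps)
    hence "L \<ge> 12" using L6 by simp
    moreover have "2*d*L \<ge> 0" using d L0 by simp
    ultimately show ?thesis using k0ge by (simp add: algebra_simps)
  qed
  hence k3: "k0 \<ge> 3" by simp
  define t where "t = 2*q/((real k0 - 1)*p)"
  have t0: "t > 0" unfolding t_def using q0 p0 k0_3 by simp
  have t1: "t \<le> 1"
  proof -
    have "2*q \<le> (real k0 - 1)*p"
    proof (cases "p \<le> 1/2")
      case False
      have "(real k0 - 1) * p \<ge> 23 * p" by (rule mult_right_mono) (use k0_3 p in auto)
      thus ?thesis using False q_def by linarith
    next
      case True
      have "Q \<le> 1/q - 1" unfolding Q_def using ln_le_minus_one[of "1/q"] q0 by simp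
      also have "\<dots> = p/q" using q0 q_def by (simp add: field_simps)
      also have "\<dots> \<le> 2*p" using True q0 q_def p0 by (simp add: divide_le_eq)
      finally have Qp: "Q \<le> 2*p" .
      have "ln X = L * Q" using LQ by simp
      also have "\<dots> \<le> L * (2*p)" by (rule mult_left_mono[OF Qp]) (use L0 in simp)
      also have "\<dots> \<le> real k0 * p"
      proof -
        have "2*d*L \<ge> 0" using d L0 by simp
        hence "2*L \<le> real k0" using k0ge by (simp add: algebra_simps)
        hence "2*L*p \<le> real k0 * p" using p0 by (simp add: mult_right_mono)
        thus ?thesis by (simp add: algebra_simps)
      qed
      finally have "ln X \<le> real k0 * p" .
      moreover have "ln X \<ge> 3"
      proof -
        have "12/d \<ge> 3" using d by (simp add: field_simps)
        thus ?thesis using lX by linarith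
      qed
      ultimately show ?thesis using q_def p True by (simp add: algebra_simps)
    qed
    thus ?thesis unfolding t_def using p0 k0_3 by (simp add: divide_le_eq)
  qed
  have H: "ln (real n * p) + 2 - ((real k0 - 3)/2) * ln (1/q) \<le> -1"
  proof -
    have "(real k0 - 3)/2 * Q \<ge> ((2+2*d)*L - 3)/2 * Q"
      using k0ge Q0 by (simp add: mult_right_mono divide_right_mono)
    also have "((2+2*d)*L - 3)/2 * Q = (1+d) * (L * Q) - 3/2 * Q" by (simp add: field_simps)
    also have "\<dots> = (1+d) * ln X - 3/2 * Q" unfolding LQ ..
    finally have "(real k0 - 3)/2 * Q \<ge> (1+d) * ln X - 3/2 * Q" .
    moreover have "d * ln X \<ge> 12" using lX d by (simp add: field_simps)
    ultimately show ?thesis using QX unfolding X_def Q_def by (simp add: algebra_simps)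
  qed
  have num: "real (n choose k0) * ((p*t + q) ^ (k0 choose 2) / t ^ k0) \<le> 1/2"
    by (rule numeric[OF p0 p1 q_def k3 t_def H])
  have sp: "prob_Gnp n p (\<lambda>Ed. \<exists>S\<subseteq>{..<n}. card S = k0 \<and> card {e\<in>Ed. e \<subseteq> S} \<le> k0) \<le> 1/2"
    using sparse_bound[OF p t0 t1, of n k0 k0] num unfolding q_def by linarith
  define P where "P k = (k > 0 \<and> prob_Gnp n p (\<lambda>Ed. \<exists>W\<subseteq>{..<n}. card W = k \<and> good_set 2 conn Ed W) > 1/2)" for k
  have Pk: "k < k0" if "P k" for k
  proof (rule ccontr)
    assume "\<not> k < k0" hence kk: "k0 \<le> k" by simp
    have "prob_Gnp n p (\<lambda>Ed. \<exists>W\<subseteq>{..<n}. card W = k \<and> good_set 2 conn Ed W)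
          \<le> prob_Gnp n p (\<lambda>Ed. \<exists>S\<subseteq>{..<n}. card S = k0 \<and> card {e\<in>Ed. e \<subseteq> S} \<le> k0)"
    proof (rule prob_mono[OF p])
      fix Ed assume Ed: "Ed \<subseteq> all_edges n" and "\<exists>W\<subseteq>{..<n}. card W = k \<and> good_set 2 conn Ed W"
      then obtain W where W: "W \<subseteq> {..<n}" "card W = k" "good_set 2 conn Ed W" by blast
      obtain S where S: "S \<subseteq> W" "card S = k0" using obtain_subset_with_card_n[of k0 W] kk W(2) by metis
      have "card {e\<in>Ed. e \<subseteq> S} \<le> k0" using good_sparse[OF W(3) Ed W(1) S(1)] S(2) by simp
      thus "\<exists>S\<subseteq>{..<n}. card S = k0 \<and> card {e\<in>Ed. e \<subseteq> S} \<le> k0" using S W(1) by blast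
    qed
    thus False using that sp unfolding P_def by simp
  qed
  have "u_gen 2 conn n p \<le> k0 - 1"
  proof (cases "\<exists>k. P k")
    case True
    then obtain k where "P k" by blast
    have "P (Greatest P)" by (rule GreatestI_nat[where P=P and k=k and b=k0, OF \<open>P k\<close>]) (use Pk in \<open>auto simp: less_imp_le\<close>)
    hence "Greatest P < k0" by (rule Pk)
    moreover have "u_gen 2 conn n p = Greatest P"
    proof -
      have ex: "\<exists>k>0. prob_Gnp n p (\<lambda>Ed. \<exists>W\<subseteq>{..<n}. card W = k \<and> good_set 2 conn Ed W) > 1/2"
        using \<open>P k\<close> unfolding P_def by blast
      show ?thesis unfolding u_gen_def if_P[OF ex] P_def ..
    qed
    ultimately show ?thesis by simp
  next
    case False
    have nx: "\<not> (\<exists>k>0. prob_Gnp n p (\<lambda>Ed. \<exists>W\<subseteq>{..<n}. card W = k \<and> good_set 2 conn Ed W) > 1/2)"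
      using False unfolding P_def by blast
    have "u_gen 2 conn n p = 0" unfolding u_gen_def if_not_P[OF nx] ..
    thus ?thesis by simp
  qed
  hence "real (u_gen 2 conn n p) \<le> real k0 - 1" using k3 by linarith
  also have "\<dots> \<le> (2+2*d) * L" using k0lt by simp
  finally show ?thesis unfolding logL using L0 by simp
qed

theorem theorem16:
  fixes p :: "nat \<Rightarrow> real"
  assumes p_range: "\<And>n. 0 \<le> p n \<and> p n \<le> 1"
    and np_inf: "filterlim (\<lambda>n. real n * p n) at_top sequentially"
    and qln_inf: "filterlim (\<lambda>n. (1 - p n) * ln (real n)) at_top sequentially"
  shows "\<forall>\<epsilon>>0. \<exists>n0. \<forall>n\<ge>n0.
           real (u 2 n (p n)) \<le> (2 + \<epsilon>) * log (1 / (1 - p n)) (real n * p n) \<and>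
           real (u' 2 n (p n)) \<le> (2 + \<epsilon>) * log (1 / (1 - p n)) (real n * p n)"
proof (intro allI impI)
  fix \<epsilon> :: real assume \<epsilon>: "\<epsilon> > 0"
  define d where "d = min (\<epsilon>/4) (1/4)"
  have d: "0 < d" "d \<le> 1/4" "2 + 2*d \<le> 2 + \<epsilon>" unfolding d_def using \<epsilon> by auto
  define e where "e = d/6"
  have e0: "e > 0" unfolding e_def using d by simp
  define B where "B = max (max (4/e^2) (2 * ln 2)) 1"
  have ev1: "eventually (\<lambda>n. 1 \<le> (1 - p n) * ln (real n)) sequentially"
    using qln_inf unfolding filterlim_at_top by blast
  have ev2: "eventually (\<lambda>n. exp (12/d) \<le> real n * p n) sequentially"
    using np_inf unfolding filterlim_at_top by blast
  have ev3: "eventually (\<lambda>n. exp B \<le> real n) sequentially"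
    using filterlim_real_sequentially unfolding filterlim_at_top by blast
  obtain N where N: "\<And>n. n \<ge> N \<Longrightarrow> 1 \<le> (1 - p n) * ln (real n) \<and> exp (12/d) \<le> real n * p n \<and> exp B \<le> real n"
    using eventually_conj[OF ev1 eventually_conj[OF ev2 ev3]] unfolding eventually_sequentially by blast
  show "\<exists>n0. \<forall>n\<ge>n0.
           real (u 2 n (p n)) \<le> (2 + \<epsilon>) * log (1 / (1 - p n)) (real n * p n) \<and>
           real (u' 2 n (p n)) \<le> (2 + \<epsilon>) * log (1 / (1 - p n)) (real n * p n)"
  proof (intro exI allI impI)
    fix n assume n: "N \<le> n"
    have h1: "1 \<le> (1 - p n) * ln (real n)" and h2: "exp (12/d) \<le> real n * p n"
      and hB: "exp B \<le> real n" using N[OF n] by auto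
    have "0 < real n" using hB exp_gt_zero[of B] by linarith
    hence "ln (exp B) \<le> ln (real n)" using hB by (subst ln_le_cancel_iff) auto
    hence lB: "B \<le> ln (real n)" by simp
    have "ln (ln (real n)) \<le> e * ln (real n)"
      by (rule ln_le_small[OF _ e0]) (use lB in \<open>auto simp: B_def\<close>)
    also have "\<dots> \<le> (d/3) * (ln (real n) - ln 2)"
    proof -
      have "2 * ln 2 \<le> ln (real n)" using lB unfolding B_def by simp
      hence "0 \<le> (d/6) * (ln (real n) - 2 * ln 2)" using d by simp
      thus ?thesis unfolding e_def by (simp add: algebra_simps)
    qed
    finally have h3: "ln (ln (real n)) \<le> (d/3) * (ln (real n) - ln 2)" .
    have A: "real (u_gen 2 conn n (p n)) \<le> (2+2*d) * log (1/(1-p n)) (real n * p n) \<and> log (1/(1-p n)) (real n * p n) > 0" for conn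
      using main_n[OF conjunct1[OF p_range] conjunct2[OF p_range] d(1,2) h1 h2 h3] .
    have B2: "(2+2*d) * log (1/(1-p n)) (real n * p n) \<le> (2+\<epsilon>) * log (1/(1-p n)) (real n * p n)"
      using A[of False] d(3) by (simp add: mult_right_mono)
    show "real (u 2 n (p n)) \<le> (2 + \<epsilon>) * log (1 / (1 - p n)) (real n * p n) \<and>
           real (u' 2 n (p n)) \<le> (2 + \<epsilon>) * log (1 / (1 - p n)) (real n * p n)"
      unfolding u_def u'_def using A[of False] A[of True] B2 by linarith
  qed
qed


end
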